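(* Let $p \in \omega^*$ be a selective ultrafilter and consider the subspace $\{p\} \cup \omega$ of $\beta\omega$. Then $\mathsf{S}_1(\Omega_p, \Omega_p)$ holds in $\{p\}\cup\omega$, but $(\{p\} \cup \omega) \times S_{\mathfrak{c}}$ does not have countable tightness at $\langle p, 0\rangle$.
   Context: $\omega^* = \beta\omega \setminus \omega$ is the set of free ultrafilters on $\omega$; in $\{p\}\cup\omega$ the points of $\omega$ are isolated and the neighborhoods of $p$ are the sets $\{p\}\cup P$ with $P \in p$. A point $p \in \omega^*$ is a selective ultrafilter if for every partition $\{A_n : n < \omega\}$ of $\omega$ with $A_n \notin p$ for each $n$ there is $P \in p$ with $|P \cap A_n| = 1$ for each $n$. $\Omega_p$ is the collection of sets $A$ with $p \notin A$ and $p \in \overline{A}$; $\mathsf{S}_1(\Omega_p,\Omega_p)$ means that for every sequence $(A_n)_{n\in\omega}$ of elements of $\Omega_p$ one can select $a_n \in A_n$ with $\{a_n : n \in \omega\} \in \Omega_p$. $S_{\mathfrak{c}}$ is the sequential fan: the set $\{0\} \cup \bigcup_{\alpha < \mathfrak{c}} \{z_n^\alpha : n < \omega\}$ with all $z_n^\alpha$ distinct and isolated, and with basic neighborhoods of $0$ the sets $V(f) = \{0\} \cup \bigcup_{\alpha<\mathfrak{c}}\{z_n^\alpha : n \ge f(\alpha)\}$ for $f \in {}^{\mathfrak{c}}\omega$. A space $Z$ has countable tightness at $z$ if whenever $z \in \overline{A}$ there is a countable $B \subset A$ with $z \in \overline{B}$. *)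

theory Defs
  imports "HOL-Analysis.Analysis"
begin

text \<open>Points of omega-star: free ultrafilters on nat, as families of subsets of nat.\<close>
definition free_ultrafilter_nat :: "nat set set \<Rightarrow> bool" where
  "free_ultrafilter_nat p \<longleftrightarrow>
     {} \<notin> p \<and>
     (\<forall>A B. A \<in> p \<and> B \<in> p \<longrightarrow> A \<inter> B \<in> p) \<and>
     (\<forall>A B. A \<in> p \<and> A \<subseteq> B \<longrightarrow> B \<in> p) \<and>
     (\<forall>A. A \<in> p \<or> - A \<in> p) \<and>
     (\<forall>A\<in>p. infinite A)"

definition selective :: "nat set set \<Rightarrow> bool" where
  "selective p \<longleftrightarrow> free_ultrafilter_nat p \<and>
     (\<forall>A :: nat \<Rightarrow> nat set.
        (\<forall>n. A n \<noteq> {}) \<and> (\<forall>m n. m \<noteq> n \<longrightarrow> A m \<inter> A n = {}) \<and> (\<Union>n. A n) = UNIV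
        \<and> (\<forall>n. A n \<notin> p)
        \<longrightarrow> (\<exists>P\<in>p. \<forall>n. card (P \<inter> A n) = 1 \<and> finite (P \<inter> A n)))"

text \<open>The space {p} \<union> omega: None stands for p, Some n for the natural number n.
  Points of omega are isolated; neighbourhoods of p are {p} \<union> P with P \<in> p.\<close>
definition pomega_topology :: "nat set set \<Rightarrow> nat option topology" where
  "pomega_topology p = topology (\<lambda>U. None \<in> U \<longrightarrow> (\<exists>P\<in>p. Some ` P \<subseteq> U))"

definition Omega_p :: "nat set set \<Rightarrow> nat option set set" where
  "Omega_p p = {A. A \<subseteq> topspace (pomega_topology p) \<and> None \<notin> A \<and>
                    None \<in> (pomega_topology p) closure_of A}"

definition S1_Omega_p :: "nat set set \<Rightarrow> bool" where
  "S1_Omega_p p \<longleftrightarrow>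
     (\<forall>A :: nat \<Rightarrow> nat option set. (\<forall>n. A n \<in> Omega_p p) \<longrightarrow>
        (\<exists>a. (\<forall>n. a n \<in> A n) \<and> range a \<in> Omega_p p))"

text \<open>The sequential fan S_c: None is the point 0 and Some (alpha, n) is z_n^alpha; the
  index set of size continuum is the type real.\<close>
definition seq_fan_topology :: "(real \<times> nat) option topology" where
  "seq_fan_topology = topology (\<lambda>U. None \<in> U \<longrightarrow>
       (\<exists>f :: real \<Rightarrow> nat. \<forall>\<alpha> n. f \<alpha> \<le> n \<longrightarrow> Some (\<alpha>, n) \<in> U))"

definition countable_tightness_at :: "'a topology \<Rightarrow> 'a \<Rightarrow> bool" where
  "countable_tightness_at X z \<longleftrightarrow>
     (\<forall>A. A \<subseteq> topspace X \<and> z \<in> X closure_of A \<longrightarrow>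
        (\<exists>B\<subseteq>A. countable B \<and> z \<in> X closure_of B))"

end

theory Submission
  imports Defs
begin



abbreviation "fu \<equiv> free_ultrafilter_nat"

lemma fu_UNIV: "fu p \<Longrightarrow> UNIV \<in> p"
  unfolding free_ultrafilter_nat_def by (metis Compl_empty_eq)

lemma fu_int: "fu p \<Longrightarrow> A \<in> p \<Longrightarrow> B \<in> p \<Longrightarrow> A \<inter> B \<in> p"
  unfolding free_ultrafilter_nat_def by (elim conjE allE impE) auto

lemma fu_mono: "fu p \<Longrightarrow> A \<in> p \<Longrightarrow> A \<subseteq> B \<Longrightarrow> B \<in> p"
  unfolding free_ultrafilter_nat_def by (elim conjE allE impE) auto

lemma fu_empty: "fu p \<Longrightarrow> {} \<notin> p"
  unfolding free_ultrafilter_nat_def by (elim conjE)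

lemma fu_inf: "fu p \<Longrightarrow> A \<in> p \<Longrightarrow> infinite A"
  unfolding free_ultrafilter_nat_def by (elim conjE) auto

lemma fu_notin: "fu p \<Longrightarrow> A \<notin> p \<Longrightarrow> - A \<in> p"
  unfolding free_ultrafilter_nat_def by (elim conjE allE) auto

lemma fu_compl: "fu p \<Longrightarrow> A \<in> p \<Longrightarrow> - A \<notin> p"
proof
  assume f: "fu p" and a: "A \<in> p" and b: "- A \<in> p"
  have "A \<inter> - A \<in> p" by (rule fu_int[OF f a b])
  then show False using fu_empty[OF f] by simp
qed

lemma fu_ne: "fu p \<Longrightarrow> A \<in> p \<Longrightarrow> A \<noteq> {}"
  using fu_empty by blast

lemma fu_sub_notin: "fu p \<Longrightarrow> A \<notin> p \<Longrightarrow> B \<subseteq> A \<Longrightarrow> B \<notin> p"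
  using fu_mono by blast

lemma fu_Un_notin: "fu p \<Longrightarrow> A \<notin> p \<Longrightarrow> B \<notin> p \<Longrightarrow> A \<union> B \<notin> p"
proof
  assume f: "fu p" and a: "A \<notin> p" and b: "B \<notin> p" and ab: "A \<union> B \<in> p"
  have "- A \<inter> - B \<in> p" using f a b fu_notin fu_int by blast
  then have "(A \<union> B) \<inter> (- A \<inter> - B) \<in> p" using fu_int[OF f ab] by blast
  moreover have "(A \<union> B) \<inter> (- A \<inter> - B) = {}" by blast
  ultimately show False using fu_empty[OF f] by simp
qed

lemma fu_finite_Union:
  assumes f: "fu p" shows "finite F \<Longrightarrow> (\<forall>A\<in>F. A \<notin> p) \<Longrightarrow> \<Union>F \<notin> p"
proof (induction F rule: finite_induct)
  case empty then show ?case using fu_empty[OF f] by simp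
next
  case (insert x F) then show ?case using fu_Un_notin[OF f] by simp
qed

definition pomega_open :: "nat set set \<Rightarrow> nat option set \<Rightarrow> bool" where
  "pomega_open p = (\<lambda>U. None \<in> U \<longrightarrow> (\<exists>P\<in>p. Some ` P \<subseteq> U))"

lemma istop_pomega: "fu p \<Longrightarrow> istopology (pomega_open p)"
  unfolding istopology_def pomega_open_def
proof (intro conjI allI impI)
  fix S T assume f: "fu p" and S: "None \<in> S \<longrightarrow> (\<exists>P\<in>p. Some ` P \<subseteq> S)"
    and T: "None \<in> T \<longrightarrow> (\<exists>P\<in>p. Some ` P \<subseteq> T)" and N: "None \<in> S \<inter> T"
  then obtain P Q where "P \<in> p" "Q \<in> p" "Some ` P \<subseteq> S" "Some ` Q \<subseteq> T" by auto
  then show "\<exists>P\<in>p. Some ` P \<subseteq> S \<inter> T" using fu_int[OF f] by (intro bexI[of _ "P \<inter> Q"]) auto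
next
  fix K :: "nat option set set"
  assume K: "\<forall>K\<in>K. None \<in> K \<longrightarrow> (\<exists>P\<in>p. Some ` P \<subseteq> K)" and N: "None \<in> \<Union>K"
  then obtain k where "k \<in> K" "None \<in> k" by auto
  with K obtain P where "P \<in> p" "Some ` P \<subseteq> k" by auto
  then show "\<exists>P\<in>p. Some ` P \<subseteq> \<Union>K" using \<open>k \<in> K\<close> by blast
qed

lemma openin_pomega: "fu p \<Longrightarrow> openin (pomega_topology p) U \<longleftrightarrow> (None \<in> U \<longrightarrow> (\<exists>P\<in>p. Some ` P \<subseteq> U))"
proof -
  assume f: "fu p"
  have "openin (pomega_topology p) = pomega_open p"
    unfolding pomega_topology_def using topology_inverse'[OF istop_pomega[OF f]]
    unfolding pomega_open_def .
  then show ?thesis by (simp add: pomega_open_def)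
qed

lemma topspace_pomega: "fu p \<Longrightarrow> topspace (pomega_topology p) = UNIV"
proof -
  assume f: "fu p"
  have "openin (pomega_topology p) UNIV" using openin_pomega[OF f] fu_UNIV[OF f] by blast
  then show ?thesis using openin_subset by blast
qed

definition fan_open :: "(real \<times> nat) option set \<Rightarrow> bool" where
  "fan_open = (\<lambda>U. None \<in> U \<longrightarrow>
       (\<exists>f :: real \<Rightarrow> nat. \<forall>\<alpha> n. f \<alpha> \<le> n \<longrightarrow> Some (\<alpha>, n) \<in> U))"

lemma istop_fan: "istopology fan_open"
  unfolding istopology_def
proof (intro conjI allI impI)
  fix S T :: "(real \<times> nat) option set"
  assume S: "fan_open S" and T: "fan_open T"
  show "fan_open (S \<inter> T)"
    unfolding fan_open_def
  proof
    assume N: "None \<in> S \<inter> T"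
    obtain f :: "real \<Rightarrow> nat" where f: "\<forall>\<alpha> n. f \<alpha> \<le> n \<longrightarrow> Some (\<alpha>, n) \<in> S"
      using S N unfolding fan_open_def by (metis IntD1)
    obtain g :: "real \<Rightarrow> nat" where g: "\<forall>\<alpha> n. g \<alpha> \<le> n \<longrightarrow> Some (\<alpha>, n) \<in> T"
      using T N unfolding fan_open_def by (metis IntD2)
    have "\<forall>\<alpha> n. max (f \<alpha>) (g \<alpha>) \<le> n \<longrightarrow> Some (\<alpha>, n) \<in> S \<inter> T"
      using f g by simp
    then show "\<exists>h :: real \<Rightarrow> nat. \<forall>\<alpha> n. h \<alpha> \<le> n \<longrightarrow> Some (\<alpha>, n) \<in> S \<inter> T"
      by (rule exI[of _ "\<lambda>\<alpha>. max (f \<alpha>) (g \<alpha>)"])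
  qed
next
  fix K :: "(real \<times> nat) option set set"
  assume K: "\<forall>k\<in>K. fan_open k"
  show "fan_open (\<Union>K)"
    unfolding fan_open_def
  proof
    assume N: "None \<in> \<Union>K"
    then obtain k where k: "k \<in> K" "None \<in> k" by auto
    then obtain f :: "real \<Rightarrow> nat" where f: "\<forall>\<alpha> n. f \<alpha> \<le> n \<longrightarrow> Some (\<alpha>, n) \<in> k"
      using K unfolding fan_open_def by metis
    have "\<forall>\<alpha> n. f \<alpha> \<le> n \<longrightarrow> Some (\<alpha>, n) \<in> \<Union>K" using f k by blast
    then show "\<exists>f :: real \<Rightarrow> nat. \<forall>\<alpha> n. f \<alpha> \<le> n \<longrightarrow> Some (\<alpha>, n) \<in> \<Union>K"
      by (rule exI[of _ f])
  qed
qed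

lemma openin_fan: "openin seq_fan_topology U \<longleftrightarrow> (None \<in> U \<longrightarrow>
       (\<exists>f :: real \<Rightarrow> nat. \<forall>\<alpha> n. f \<alpha> \<le> n \<longrightarrow> Some (\<alpha>, n) \<in> U))"
proof -
  have "openin seq_fan_topology = fan_open"
    unfolding seq_fan_topology_def using topology_inverse'[OF istop_fan]
    unfolding fan_open_def .
  then show ?thesis by (simp add: fan_open_def)
qed

lemma topspace_fan: "topspace seq_fan_topology = UNIV"
proof -
  have "openin seq_fan_topology UNIV" using openin_fan by blast
  then show ?thesis using openin_subset by blast
qed



lemma selective_fu: "selective p \<Longrightarrow> fu p"
  unfolding selective_def by (elim conjE)

lemma selective_inj:
  fixes g :: "nat \<Rightarrow> nat"
  assumes sel: "selective p" and fib: "\<And>y. g -` {y} \<notin> p"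
  shows "\<exists>P\<in>p. inj_on g P"
proof -
  have f: "fu p" using sel by (rule selective_fu)
  have inf: "infinite (range g)"
  proof
    assume fin: "finite (range g)"
    have "\<Union>((\<lambda>y. g -` {y}) ` range g) \<notin> p"
      by (rule fu_finite_Union[OF f]) (use fin fib in auto)
    moreover have "\<Union>((\<lambda>y. g -` {y}) ` range g) = UNIV" by auto
    ultimately show False using fu_UNIV[OF f] by simp
  qed
  define r where "r = enumerate (range g)"
  have bij: "bij_betw r UNIV (range g)" using bij_enumerate[OF inf] r_def by simp
  then have injr: "inj r" and rr: "range r = range g" by (auto simp: bij_betw_def)
  define A where "A n = g -` {r n}" for n
  have Ane: "\<forall>n. A n \<noteq> {}"
  proof
    fix n
    have "r n \<in> range g" using rr by blast
    then show "A n \<noteq> {}" unfolding A_def by auto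
  qed
  have Adisj: "\<forall>m n. m \<noteq> n \<longrightarrow> A m \<inter> A n = {}"
    using injr unfolding A_def inj_def by auto
  have Acov: "(\<Union>n. A n) = UNIV"
  proof (rule set_eqI)
    fix x
    have "g x \<in> range r" using rr by blast
    then obtain n where "g x = r n" by blast
    then show "x \<in> (\<Union>n. A n) \<longleftrightarrow> x \<in> UNIV" unfolding A_def by auto
  qed
  have Anp: "\<forall>n. A n \<notin> p" unfolding A_def using fib by blast
  obtain P where P: "P \<in> p" "\<forall>n. card (P \<inter> A n) = 1 \<and> finite (P \<inter> A n)"
    using sel Ane Adisj Acov Anp unfolding selective_def by metis
  have "inj_on g P"
  proof (rule inj_onI)
    fix x y assume x: "x \<in> P" and y: "y \<in> P" and e: "g x = g y"
    have "g x \<in> range r" using rr by blast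
    then obtain n where n: "g x = r n" by blast
    have "x \<in> P \<inter> A n" "y \<in> P \<inter> A n" using x y e n unfolding A_def by auto
    moreover obtain z where "P \<inter> A n = {z}" using P(2) card_1_singletonE by blast
    ultimately show "x = y" by auto
  qed
  then show ?thesis using P(1) by blast
qed

lemma core:
  assumes sel: "selective p" and C: "\<And>n. C n \<in> p" and dec: "\<And>n. C (Suc n) \<subseteq> C n"
    and D: "(\<Inter>n. C n) \<notin> p"
  shows "\<exists>Q\<in>p. \<exists>k. inj_on k Q \<and> (\<forall>x\<in>Q. x \<in> C (k x) \<and> (\<forall>m. x \<in> C m \<longrightarrow> m \<le> k x))"
proof -
  have f: "fu p" using sel by (rule selective_fu)
  define k where "k x = (LEAST n. x \<notin> C (Suc n))" for x
  define g where "g x = (if x \<in> C 0 \<and> x \<notin> (\<Inter>n. C n) then Suc (k x) else 0)" for x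
  have kprop: "x \<notin> C (Suc (k x))" if h1: "x \<in> C 0" and h2: "x \<notin> (\<Inter>n. C n)" for x
  proof -
    obtain m where m: "x \<notin> C m" using h2 by blast
    then obtain m' where "m = Suc m'" using h1 by (cases m) auto
    then have "\<exists>n. x \<notin> C (Suc n)" using m by blast
    then show ?thesis unfolding k_def by (rule LeastI_ex)
  qed
  have fib: "g -` {y} \<notin> p" for y
  proof (cases y)
    case 0
    have "g -` {y} \<subseteq> - C 0 \<union> (\<Inter>n. C n)" using 0 by (auto simp: g_def split: if_splits)
    moreover have "- C 0 \<union> (\<Inter>n. C n) \<notin> p"
      using fu_Un_notin[OF f fu_compl[OF f C] D] .
    ultimately show ?thesis using fu_sub_notin[OF f] by blast
  next
    case (Suc n)
    have "g -` {y} \<subseteq> - C (Suc n)"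
    proof
      fix x assume "x \<in> g -` {y}"
      then have "g x = Suc n" using Suc by simp
      then have "x \<in> C 0" "x \<notin> (\<Inter>n. C n)" "k x = n" unfolding g_def by (auto split: if_splits)
      then show "x \<in> - C (Suc n)" using kprop by auto
    qed
    then show ?thesis using fu_sub_notin[OF f fu_compl[OF f C]] by blast
  qed
  obtain P where P: "P \<in> p" "inj_on g P" using selective_inj[OF sel fib] by blast
  define Q where "Q = P \<inter> C 0 \<inter> - (\<Inter>n. C n)"
  have Qp: "Q \<in> p" unfolding Q_def using fu_int[OF f] P(1) C fu_notin[OF f D] by blast
  have "inj_on k Q"
  proof (rule inj_onI)
    fix x y assume x: "x \<in> Q" and y: "y \<in> Q" and e: "k x = k y"
    have "g x = g y" using x y e unfolding Q_def g_def by auto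
    then show "x = y" using P(2) x y unfolding Q_def inj_on_def by blast
  qed
  moreover have "\<forall>x\<in>Q. x \<in> C (k x) \<and> (\<forall>m. x \<in> C m \<longrightarrow> m \<le> k x)"
  proof
    fix x assume x: "x \<in> Q"
    then have x0: "x \<in> C 0" and xD: "x \<notin> (\<Inter>n. C n)" unfolding Q_def by auto
    have "x \<in> C (k x)"
    proof (cases "k x")
      case 0 then show ?thesis using x0 by simp
    next
      case (Suc j)
      then have "j < k x" by simp
      then have "\<not> (x \<notin> C (Suc j))" unfolding k_def by (rule not_less_Least)
      then show ?thesis using Suc by simp
    qed
    moreover have "m \<le> k x" if "x \<in> C m" for m
    proof (rule ccontr)
      assume "\<not> m \<le> k x"
      then have "Suc (k x) \<le> m" by simp
      then have "C m \<subseteq> C (Suc (k x))" by (rule lift_Suc_antimono_le[of C, OF dec])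
      then show False using that kprop[OF x0 xD] by blast
    qed
    ultimately show "x \<in> C (k x) \<and> (\<forall>m. x \<in> C m \<longrightarrow> m \<le> k x)" by blast
  qed
  ultimately show ?thesis using Qp by blast
qed



lemma ppoint:
  fixes X :: "nat \<Rightarrow> nat set"
  assumes sel: "selective p" and X: "\<And>n. X n \<in> p"
  shows "\<exists>Q\<in>p. \<forall>n. finite (Q - X n)"
proof -
  have f: "fu p" using sel by (rule selective_fu)
  define C where "C n = (\<Inter>j\<le>n. X j)" for n
  have C: "C n \<in> p" for n
  proof (induction n)
    case 0 then show ?case using X by (simp add: C_def)
  next
    case (Suc n)
    have "C (Suc n) = C n \<inter> X (Suc n)" unfolding C_def by (auto simp: atMost_Suc)
    then show ?case using fu_int[OF f Suc X] by simp
  qed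
  have dec: "C (Suc n) \<subseteq> C n" for n unfolding C_def by auto
  have CX: "C n \<subseteq> X n" for n unfolding C_def by auto
  show ?thesis
  proof (cases "(\<Inter>n. C n) \<in> p")
    case True
    have "(\<Inter>n. C n) - X n = {}" for n using CX by blast
    then show ?thesis using True by (metis finite.emptyI)
  next
    case False
    obtain Q k where Q: "Q \<in> p" "inj_on k Q" "\<forall>x\<in>Q. x \<in> C (k x) \<and> (\<forall>m. x \<in> C m \<longrightarrow> m \<le> k x)"
      using core[OF sel C dec False] by blast
    have "finite (Q - X n)" for n
    proof -
      have "Q - X n \<subseteq> k -` {..<n} \<inter> Q"
      proof
        fix x assume x: "x \<in> Q - X n"
        have "k x < n"
        proof (rule ccontr)
          assume "\<not> k x < n" then have "n \<le> k x" by simp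
          then have "C (k x) \<subseteq> C n" by (rule lift_Suc_antimono_le[of C, OF dec])
          then show False using x Q(3) CX by blast
        qed
        then show "x \<in> k -` {..<n} \<inter> Q" using x by auto
      qed
      moreover have "finite (k -` {..<n} \<inter> Q)" by (rule finite_vimage_IntI) (use Q(2) in auto)
      ultimately show ?thesis by (rule finite_subset)
    qed
    then show ?thesis using Q(1) by blast
  qed
qed

lemma s1_sel:
  fixes B :: "nat \<Rightarrow> nat set"
  assumes sel: "selective p" and B: "\<And>n. B n \<in> p"
  shows "\<exists>a. (\<forall>n. a n \<in> B n) \<and> range a \<in> p"
proof -
  have f: "fu p" using sel by (rule selective_fu)
  define C where "C n = (\<Inter>j\<le>n. B j)" for n
  have C: "C n \<in> p" for n
  proof (induction n)
    case 0 then show ?case using B by (simp add: C_def)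
  next
    case (Suc n)
    have "C (Suc n) = C n \<inter> B (Suc n)" unfolding C_def by (auto simp: atMost_Suc)
    then show ?case using fu_int[OF f Suc B] by simp
  qed
  have dec: "C (Suc n) \<subseteq> C n" for n unfolding C_def by auto
  have CB: "C n \<subseteq> B n" for n unfolding C_def by auto
  show ?thesis
  proof (cases "(\<Inter>n. C n) \<in> p")
    case True
    define D where "D = (\<Inter>n. C n)"
    have inf: "infinite D" using fu_inf[OF f True] D_def by simp
    have r: "range (enumerate D) = D"
      using bij_enumerate[OF inf] by (simp add: bij_betw_def)
    have "enumerate D n \<in> B n" for n
      using enumerate_in_set[OF inf, of n] CB unfolding D_def by blast
    then show ?thesis using r True D_def by metis
  next
    case False
    obtain Q k where Q: "Q \<in> p" "inj_on k Q" "\<forall>x\<in>Q. x \<in> C (k x) \<and> (\<forall>m. x \<in> C m \<longrightarrow> m \<le> k x)"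
      using core[OF sel C dec False] by blast
    define a where "a n = (if n \<in> k ` Q then inv_into Q k n else (SOME x. x \<in> C n))" for n
    have "a n \<in> C n" for n
    proof (cases "n \<in> k ` Q")
      case True
      then have "inv_into Q k n \<in> Q" "k (inv_into Q k n) = n"
        by (auto intro: inv_into_into f_inv_into_f)
      then show ?thesis using True Q(3) unfolding a_def by metis
    next
      case False
      have "\<exists>x. x \<in> C n" using fu_ne[OF f C] by blast
      then have "(SOME x. x \<in> C n) \<in> C n" by (rule someI_ex)
      then show ?thesis using False unfolding a_def by simp
    qed
    then have aB: "\<forall>n. a n \<in> B n" using CB by blast
    have "Q \<subseteq> range a"
    proof
      fix x assume x: "x \<in> Q"
      have "a (k x) = x" unfolding a_def using x inv_into_f_f[OF Q(2) x] by auto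
      then show "x \<in> range a" by (metis rangeI)
    qed
    then have "range a \<in> p" using fu_mono[OF f Q(1)] by blast
    then show ?thesis using aB by blast
  qed
qed

lemma split_inf:
  assumes f: "fu p" and P: "P \<in> p"
  shows "\<exists>Y. Y \<in> p \<and> Y \<subseteq> P \<and> infinite (P - Y)"
proof -
  have inf: "infinite P" using fu_inf[OF f P] .
  define e where "e = enumerate P"
  have inje: "inj e" using inj_enumerate[OF inf] e_def by simp
  define P1 where "P1 = e ` {n. even n}"
  define P2 where "P2 = e ` {n. odd n}"
  have sub: "P1 \<subseteq> P" "P2 \<subseteq> P" unfolding P1_def P2_def e_def using enumerate_in_set[OF inf] by auto
  have ie: "infinite {n::nat. even n}"
    unfolding infinite_nat_iff_unbounded_le by (metis dvd_triv_left mem_Collect_eq mult_le_mono1 mult_1 one_le_numeral)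
  have io: "infinite {n::nat. odd n}"
    unfolding infinite_nat_iff_unbounded_le
  proof
    fix m :: nat show "\<exists>n\<ge>m. n \<in> {n. odd n}" by (intro exI[of _ "2*m+1"]) auto
  qed
  have inf1: "infinite P1" unfolding P1_def using ie finite_imageD inj_on_subset[OF inje subset_UNIV] by blast
  have inf2: "infinite P2" unfolding P2_def using io finite_imageD inj_on_subset[OF inje subset_UNIV] by blast
  have disj: "P1 \<inter> P2 = {}" unfolding P1_def P2_def using inje unfolding inj_def by auto
  show ?thesis
  proof (cases "P1 \<in> p")
    case True
    have "P2 \<subseteq> P - P1" using sub disj by blast
    then have "infinite (P - P1)" using inf2 infinite_super by blast
    then show ?thesis using True sub by blast
  next
    case False
    have "P \<inter> - P1 \<in> p" using fu_int[OF f P fu_notin[OF f False]] .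
    moreover have "P - (P \<inter> - P1) = P1" using sub by blast
    ultimately show ?thesis using inf1 by (metis Int_lower1)
  qed
qed



theorem proposition4p2:
  fixes p :: "nat set set"
  assumes "free_ultrafilter_nat p" and "selective p"
  shows "S1_Omega_p p \<and>
         \<not> countable_tightness_at (prod_topology (pomega_topology p) seq_fan_topology) (None, None)"
proof
  have f: "fu p" using assms(1) .
  show "S1_Omega_p p"
    unfolding S1_Omega_p_def
  proof (intro allI impI)
    fix A :: "nat \<Rightarrow> nat option set"
    assume A: "\<forall>n. A n \<in> Omega_p p"
    define B where "B n = {m. Some m \<in> A n}" for n
    have Bp: "B n \<in> p" for n
    proof (rule ccontr)
      assume nb: "B n \<notin> p"
      have An: "None \<notin> A n" "None \<in> pomega_topology p closure_of A n"
        using A unfolding Omega_p_def by auto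
      have op: "openin (pomega_topology p) (insert None (Some ` (- B n)))"
        using fu_notin[OF f nb] by (auto simp: openin_pomega[OF f])
      obtain y where "y \<in> A n" "y \<in> insert None (Some ` (- B n))"
        using An(2) op unfolding in_closure_of by blast
      then show False using An(1) unfolding B_def by auto
    qed
    obtain a' where a': "\<forall>n. a' n \<in> B n" "range a' \<in> p" using s1_sel[of p B, OF assms(2) Bp] by blast
    show "\<exists>a. (\<forall>n. a n \<in> A n) \<and> range a \<in> Omega_p p"
    proof (intro exI conjI)
      show "\<forall>n. Some (a' n) \<in> A n" using a'(1) unfolding B_def by auto
      show "range (\<lambda>n. Some (a' n)) \<in> Omega_p p"
        unfolding Omega_p_def
      proof (intro CollectI conjI)
        show "range (\<lambda>n. Some (a' n)) \<subseteq> topspace (pomega_topology p)"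
          by (simp add: topspace_pomega[OF f])
        show "None \<notin> range (\<lambda>n. Some (a' n))" by auto
        show "None \<in> pomega_topology p closure_of range (\<lambda>n. Some (a' n))"
          unfolding in_closure_of
        proof (intro conjI allI impI)
          show "None \<in> topspace (pomega_topology p)" by (simp add: topspace_pomega[OF f])
          fix T assume T: "None \<in> T \<and> openin (pomega_topology p) T"
          then obtain P where P: "P \<in> p" "Some ` P \<subseteq> T" using openin_pomega[OF f] by blast
          have "P \<inter> range a' \<noteq> {}" using fu_ne[OF f fu_int[OF f P(1) a'(2)]] .
          then obtain m where "m \<in> P" "m \<in> range a'" by blast
          then show "\<exists>y. y \<in> range (\<lambda>n. Some (a' n)) \<and> y \<in> T" using P(2) by blast
        qed
      qed
    qed
  qed
next
  have f: "fu p" using assms(1) .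
  let ?X = "prod_topology (pomega_topology p) seq_fan_topology"
  show "\<not> countable_tightness_at ?X (None, None)"
  proof
    assume ct: "countable_tightness_at ?X (None, None)"
    obtain h :: "real \<Rightarrow> nat set" where h: "surj h"
    proof -
      have "(UNIV::real set) \<approx> (UNIV::nat set set)" using eqpoll_sym[OF nat_sets_eqpoll_reals] .
      then obtain h :: "real \<Rightarrow> nat set" where "bij_betw h UNIV UNIV" unfolding eqpoll_def by blast
      then show thesis using that bij_betw_imp_surj by blast
    qed
    define A where "A = {(Some n, Some (\<alpha>, n)) | \<alpha> n. h \<alpha> \<in> p \<and> n \<notin> h \<alpha>}"
    have top: "topspace ?X = UNIV" by (simp add: topspace_pomega[OF f] topspace_fan)
    have cl: "(None, None) \<in> ?X closure_of A"
      unfolding in_closure_of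
    proof (intro conjI allI impI)
      show "(None, None) \<in> topspace ?X" using top by simp
      fix T assume T: "(None, None) \<in> T \<and> openin ?X T"
      then obtain U V where UV: "openin (pomega_topology p) U" "openin seq_fan_topology V"
        "None \<in> U" "None \<in> V" "U \<times> V \<subseteq> T"
        unfolding openin_prod_topology_alt by blast
      obtain P where P: "P \<in> p" "Some ` P \<subseteq> U" using UV(1,3) openin_pomega[OF f] by blast
      obtain g :: "real \<Rightarrow> nat" where g: "\<forall>\<alpha> n. g \<alpha> \<le> n \<longrightarrow> Some (\<alpha>, n) \<in> V"
        using UV(2,4) openin_fan by metis
      obtain Y where Y: "Y \<in> p" "Y \<subseteq> P" "infinite (P - Y)" using split_inf[OF f P(1)] by blast
      obtain \<alpha> where ha: "h \<alpha> = Y" using h by (metis surjD)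
      obtain n where n: "n \<ge> g \<alpha>" "n \<in> P - Y" using Y(3) unfolding infinite_nat_iff_unbounded_le by blast
      have "(Some n, Some (\<alpha>, n)) \<in> A" unfolding A_def using Y(1) ha n by blast
      moreover have "(Some n, Some (\<alpha>, n)) \<in> T" using UV(5) P(2) g n by blast
      ultimately show "\<exists>y. y \<in> A \<and> y \<in> T" by blast
    qed
    have Asub: "A \<subseteq> topspace ?X" using top by simp
    have "A \<subseteq> topspace ?X \<and> (None, None) \<in> ?X closure_of A \<longrightarrow>
        (\<exists>B\<subseteq>A. countable B \<and> (None, None) \<in> ?X closure_of B)"
      using ct unfolding countable_tightness_at_def by (rule spec)
    then have "\<exists>B\<subseteq>A. countable B \<and> (None, None) \<in> ?X closure_of B" using Asub cl by (rule mp[OF _ conjI])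
    then obtain B where B: "B \<subseteq> A" "countable B" "(None, None) \<in> ?X closure_of B"
      by (elim exE conjE) (intro that)
    define S where "S = {\<alpha>. \<exists>n. (Some n, Some (\<alpha>, n)) \<in> B}"
    have Scount: "countable S"
    proof -
      have "S \<subseteq> (\<lambda>z. fst (the (snd z))) ` B" unfolding S_def by force
      then show ?thesis using countable_image[OF B(2)] countable_subset by blast
    qed
    have Sp: "h \<alpha> \<in> p" if "\<alpha> \<in> S" for \<alpha> using that B(1) unfolding S_def A_def by blast
    obtain Q where Q: "Q \<in> p" "\<forall>\<alpha>\<in>S. finite (Q - h \<alpha>)"
    proof (cases "S = {}")
      case True then show thesis using that[of UNIV] fu_UNIV[OF f] by blast
    next
      case False
      define X where "X j = h (from_nat_into S j)" for j
      have "X j \<in> p" for j unfolding X_def using Sp from_nat_into[OF False] by blast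
      then obtain Q where "Q \<in> p" "\<forall>j. finite (Q - X j)" using ppoint[OF assms(2)] by blast
      moreover have "\<forall>\<alpha>\<in>S. \<exists>j. \<alpha> = from_nat_into S j" using from_nat_into_surj[OF Scount] by blast
      ultimately show thesis using that unfolding X_def by metis
    qed
    define g where "g \<alpha> = Suc (Max (Q - h \<alpha>))" for \<alpha>
    define U where "U = insert None (Some ` Q)"
    define V where "V = insert None {Some (\<alpha>, n) | \<alpha> n. g \<alpha> \<le> n}"
    have oU: "openin (pomega_topology p) U" unfolding U_def using Q(1) openin_pomega[OF f] by blast
    have oV: "openin seq_fan_topology V" unfolding V_def openin_fan by (auto intro!: exI[of _ g])
    have oUV: "openin ?X (U \<times> V)" using oU oV openin_prod_Times_iff by blast
    have NUV: "(None, None) \<in> U \<times> V" unfolding U_def V_def by simp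
    have "\<forall>T. (None, None) \<in> T \<and> openin ?X T \<longrightarrow> (\<exists>y. y \<in> B \<and> y \<in> T)"
      using B(3) unfolding in_closure_of by (rule conjunct2)
    then have "(None, None) \<in> U \<times> V \<and> openin ?X (U \<times> V) \<longrightarrow> (\<exists>y. y \<in> B \<and> y \<in> U \<times> V)"
      by (rule spec)
    then have "\<exists>y. y \<in> B \<and> y \<in> U \<times> V" using NUV oUV by blast
    then obtain y where y: "y \<in> B" "y \<in> U \<times> V" by blast
    then obtain \<alpha> n where yeq: "y = (Some n, Some (\<alpha>, n))" "h \<alpha> \<in> p" "n \<notin> h \<alpha>"
      using B(1) unfolding A_def by blast
    have aS: "\<alpha> \<in> S" using y(1) yeq unfolding S_def by blast
    have nQ: "n \<in> Q" "g \<alpha> \<le> n" using y(2) yeq unfolding U_def V_def by auto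
    then have "n \<in> Q - h \<alpha>" using yeq by blast
    then have "n \<le> Max (Q - h \<alpha>)" using Q(2) aS by (simp add: Max_ge)
    then show False using nQ(2) g_def by simp
  qed
qed


end
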